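(* For every $n\ge1$, $$\sum_{\sigma\in\mathfrak S_n}u^{{\rm M}(\sigma)}v^{{\rm des}(\sigma)}w^{{\rm asc}(\sigma)}\alpha^{{\rm LRmin}(\sigma)+{\rm RLmin}(\sigma)-2}=\sum_{\sigma\in\mathfrak S_n}x^{{\rm des}(\sigma)}y^{{\rm asc}(\sigma)}\alpha^{{\rm LRmin}(\sigma)+{\rm RLmin}(\sigma)-2},$$ where $x=\frac{(w+v)-\sqrt{(w+v)^2-4uvw}}{2}$ and $y=\frac{(w+v)+\sqrt{(w+v)^2-4uvw}}{2}$.
   Context: For $\sigma=\sigma_1\cdots\sigma_n\in\mathfrak S_n$: ${\rm asc}(\sigma)$, ${\rm des}(\sigma)$ are the numbers of $i\in[n-1]$ with $\sigma_i<\sigma_{i+1}$, resp. $\sigma_i>\sigma_{i+1}$; ${\rm M}(\sigma)$ is the number of $i$ with $1<i<n$ and $\sigma_{i-1}<\sigma_i>\sigma_{i+1}$; ${\rm LRmin}(\sigma)$ is the number of $i$ with $\sigma_j>\sigma_i$ for all $j<i$; ${\rm RLmin}(\sigma)$ is the number of $i$ with $\sigma_j>\sigma_i$ for all $j>i$. *)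

theory Defs
  imports Complex_Main "HOL-Combinatorics.Multiset_Permutations"
begin

text \<open>A permutation sigma = sigma_1 ... sigma_n of [n] is represented as the list
  [sigma_1, ..., sigma_n] (0-indexed positions); S_n = permutations_of_set {1..n}.\<close>

definition asc :: "nat list \<Rightarrow> nat" where
  "asc s = card {i. i + 1 < length s \<and> s ! i < s ! (i + 1)}"

definition des :: "nat list \<Rightarrow> nat" where
  "des s = card {i. i + 1 < length s \<and> s ! i > s ! (i + 1)}"

definition peaks :: "nat list \<Rightarrow> nat" where
  "peaks s = card {i. 0 < i \<and> i + 1 < length s \<and> s ! (i - 1) < s ! i \<and> s ! i > s ! (i + 1)}"

definition LRmin :: "nat list \<Rightarrow> nat" where
  "LRmin s = card {i. i < length s \<and> (\<forall>j<i. s ! j > s ! i)}"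

definition RLmin :: "nat list \<Rightarrow> nat" where
  "RLmin s = card {i. i < length s \<and> (\<forall>j. i < j \<and> j < length s \<longrightarrow> s ! j > s ! i)}"

end

theory Submission
  imports Defs
begin


lemma card_window:
  fixes A B :: "nat set"
  assumes fA: "finite A" and fB: "finite B" and lh: "lo \<le> hi"
    and lo: "\<And>j. j < lo \<Longrightarrow> j \<in> A \<longleftrightarrow> j \<in> B"
    and hi: "\<And>j. hi \<le> j \<Longrightarrow> Suc j \<in> A \<longleftrightarrow> j \<in> B"
  shows "card A + card (B \<inter> {lo..<hi}) = card B + card (A \<inter> {lo..hi})"
proof -
  have e1: "A \<inter> {..<lo} = B \<inter> {..<lo}" using lo by auto
  have e2: "A \<inter> {hi<..} = Suc ` (B \<inter> {hi..})"
  proof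
    show "A \<inter> {hi<..} \<subseteq> Suc ` (B \<inter> {hi..})"
    proof
      fix x assume x: "x \<in> A \<inter> {hi<..}"
      then obtain j where j: "x = Suc j" by (cases x) auto
      with x hi[of j] show "x \<in> Suc ` (B \<inter> {hi..})" by auto
    qed
    show "Suc ` (B \<inter> {hi..}) \<subseteq> A \<inter> {hi<..}" using hi by auto
  qed
  have dA: "A = (A \<inter> {..<lo}) \<union> (A \<inter> {lo..hi}) \<union> (A \<inter> {hi<..})" by auto
  have dB: "B = (B \<inter> {..<lo}) \<union> (B \<inter> {lo..<hi}) \<union> (B \<inter> {hi..})" using lh by auto
  have cA: "card A = card (A \<inter> {..<lo}) + card (A \<inter> {lo..hi}) + card (A \<inter> {hi<..})"
    apply (subst dA)
    apply (subst card_Un_disjoint) using fA lh apply auto[3]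
    apply (subst card_Un_disjoint) using fA lh apply auto
    done
  have cB: "card B = card (B \<inter> {..<lo}) + card (B \<inter> {lo..<hi}) + card (B \<inter> {hi..})"
    apply (subst dB)
    apply (subst card_Un_disjoint) using fB lh apply auto[3]
    apply (subst card_Un_disjoint) using fB lh apply auto
    done
  have "card (A \<inter> {hi<..}) = card (B \<inter> {hi..})"
    unfolding e2 by (rule card_image) auto
  then show ?thesis using cA cB e1 by simp
qed

lemma ins_length: "i \<le> length p \<Longrightarrow> length (take i p @ m # drop i p) = Suc (length p)"
  by simp

lemma ins_nth: "i \<le> length p \<Longrightarrow>
   (take i p @ m # drop i p) ! j = (if j < i then p ! j else if j = i then m else p ! (j - 1))"
  by (auto simp: nth_append min_def nth_Cons' )



lemma card_Int_sum: "finite S \<Longrightarrow> card (A \<inter> S) = (\<Sum>j\<in>S. if j \<in> A then 1 else 0)"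
proof -
  assume "finite S"
  have "A \<inter> S = {j\<in>S. j \<in> A}" by auto
  then show ?thesis using \<open>finite S\<close> by (simp add: sum.inter_filter[symmetric])
qed

lemma cwin3: "card ((A::nat set) \<inter> {i-1..i+1}) = (if i = 0 then (if 0 \<in> A then 1 else 0) + (if 1 \<in> A then 1 else 0)
   else (if i - 1 \<in> A then 1 else 0) + (if i \<in> A then 1 else 0) + (if Suc i \<in> A then 1 else 0))"
proof (cases "i = 0")
  case True
  have "{i-1..i+1} = {0, 1}" using True by auto
  then show ?thesis using True by (simp add: card_Int_sum)
next
  case False
  have e: "{i-1..i+1} = {i-1, i, Suc i}" using False by auto
  have d: "i - 1 \<noteq> i" "i - 1 \<noteq> Suc i" using False by auto
  show ?thesis using False d unfolding e by (simp add: card_Int_sum)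
qed

lemma cwin2: "card ((A::nat set) \<inter> {i-1..<i+1}) = (if i = 0 then (if 0 \<in> A then 1 else 0)
   else (if i - 1 \<in> A then 1 else 0) + (if i \<in> A then 1 else 0))"
proof (cases "i = 0")
  case True
  have "{i-1..<i+1} = {0}" using True by auto
  then show ?thesis using True by (simp add: card_Int_sum)
next
  case False
  have e: "{i-1..<i+1} = {i-1, i}" using False by auto
  have d: "i - 1 \<noteq> i" using False by auto
  show ?thesis using False d unfolding e by (simp add: card_Int_sum)
qed

lemma win3: "0 < i \<Longrightarrow> {i-1..i+1} = {i-1, i, Suc i}" by auto
lemma win2: "0 < (i::nat) \<Longrightarrow> {i-1..<i+1} = {i-1, i}" by auto

lemma asc_ins:
  assumes i: "i \<le> length p" and n: "length p \<ge> 1" and m: "\<forall>x\<in>set p. x < m"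
  shows "asc (take i p @ m # drop i p) + (if 0 < i \<and> i < length p \<and> p!(i-1) < p!i then 1 else 0)
         = asc p + (if i = 0 then 0 else 1)"
proof -
  define s where "s = take i p @ m # drop i p"
  have ls: "length s = Suc (length p)" using i by (simp add: s_def)
  have sn: "\<And>j. s ! j = (if j < i then p ! j else if j = i then m else p ! (j - 1))"
    using i by (simp add: s_def ins_nth)
  define A where "A = {j. j + 1 < length s \<and> s ! j < s ! (j + 1)}"
  define B where "B = {j. j + 1 < length p \<and> p ! j < p ! (j + 1)}"
  have fA: "finite A" unfolding A_def by (rule finite_subset[of _ "{..<length s}"]) auto
  have fB: "finite B" unfolding B_def by (rule finite_subset[of _ "{..<length p}"]) auto
  have mlt: "\<And>j. j < length p \<Longrightarrow> p ! j < m" using m by auto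
  have W: "card A + card (B \<inter> {i-1..<i+1}) = card B + card (A \<inter> {i-1..i+1})"
  proof (rule card_window[OF fA fB])
    show "i - 1 \<le> i + 1" by simp
    fix j
    show "j < i - 1 \<Longrightarrow> (j \<in> A) = (j \<in> B)" unfolding A_def B_def using i by (auto simp: ls sn)
    show "i + 1 \<le> j \<Longrightarrow> (Suc j \<in> A) = (j \<in> B)" unfolding A_def B_def by (auto simp: ls sn)
  qed
  have cA: "asc (take i p @ m # drop i p) = card A" unfolding s_def[symmetric] asc_def A_def ..
  have cB: "asc p = card B" unfolding asc_def B_def ..
  show ?thesis
  proof (cases "i = 0")
    case True
    have "card (A \<inter> {i-1..i+1}) = (if 0 \<in> B then 1 else 0)"
      unfolding cwin3 using True n mlt[of 0] by (auto simp add: A_def B_def ls sn)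
    moreover have "card (B \<inter> {i-1..<i+1}) = (if 0 \<in> B then 1 else 0)"
      unfolding cwin2 using True by simp
    ultimately show ?thesis unfolding cA cB using W True by simp
  next
    case False
    have "card (A \<inter> {i-1..i+1}) = 1 + (if i \<in> B then 1 else 0)"
      unfolding cwin3 using False i mlt[of i] mlt[of "i-1"] by (auto simp add: A_def B_def ls sn)
    moreover have "card (B \<inter> {i-1..<i+1}) = (if i - 1 \<in> B then 1 else 0) + (if i \<in> B then 1 else 0)"
      unfolding cwin2 using False by simp
    moreover have "(i - 1 \<in> B) = (0 < i \<and> i < length p \<and> p!(i-1) < p!i)"
      using False i by (auto simp: B_def)
    ultimately show ?thesis unfolding cA cB using W False by simp
  qed
qed



lemma des_ins:
  assumes i: "i \<le> length p" and n: "length p \<ge> 1" and m: "\<forall>x\<in>set p. x < m"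
  shows "des (take i p @ m # drop i p) + (if 0 < i \<and> i < length p \<and> p!(i-1) > p!i then 1 else 0)
         = des p + (if i = length p then 0 else 1)"
proof -
  define s where "s = take i p @ m # drop i p"
  have ls: "length s = Suc (length p)" using i by (simp add: s_def)
  have sn: "\<And>j. s ! j = (if j < i then p ! j else if j = i then m else p ! (j - 1))"
    using i by (simp add: s_def ins_nth)
  define A where "A = {j. j + 1 < length s \<and> s ! j > s ! (j + 1)}"
  define B where "B = {j. j + 1 < length p \<and> p ! j > p ! (j + 1)}"
  have fA: "finite A" unfolding A_def by (rule finite_subset[of _ "{..<length s}"]) auto
  have fB: "finite B" unfolding B_def by (rule finite_subset[of _ "{..<length p}"]) auto
  have mlt: "\<And>j. j < length p \<Longrightarrow> p ! j < m" using m by auto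
  have m0: "p ! 0 < m" using mlt[of 0] n by (cases p) auto
  have W: "card A + card (B \<inter> {i-1..<i+1}) = card B + card (A \<inter> {i-1..i+1})"
  proof (rule card_window[OF fA fB])
    show "i - 1 \<le> i + 1" by simp
    fix j
    show "j < i - 1 \<Longrightarrow> (j \<in> A) = (j \<in> B)" unfolding A_def B_def using i by (auto simp: ls sn)
    show "i + 1 \<le> j \<Longrightarrow> (Suc j \<in> A) = (j \<in> B)" unfolding A_def B_def by (auto simp: ls sn)
  qed
  have cA: "des (take i p @ m # drop i p) = card A" unfolding s_def[symmetric] des_def A_def ..
  have cB: "des p = card B" unfolding des_def B_def ..
  show ?thesis
  proof (cases "i = 0")
    case True
    have "card (A \<inter> {i-1..i+1}) = 1 + (if 0 \<in> B then 1 else 0)"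
      unfolding cwin3 using True n m0 by (auto simp add: A_def B_def ls sn)
    moreover have "card (B \<inter> {i-1..<i+1}) = (if 0 \<in> B then 1 else 0)"
      unfolding cwin2 using True by simp
    ultimately show ?thesis unfolding cA cB using W True n by auto
  next
    case False
    have "card (A \<inter> {i-1..i+1}) = (if i < length p then 1 else 0) + (if i \<in> B then 1 else 0)"
      unfolding cwin3 using False i mlt[of i] mlt[of "i-1"] by (auto simp add: A_def B_def ls sn)
    moreover have "card (B \<inter> {i-1..<i+1}) = (if i - 1 \<in> B then 1 else 0) + (if i \<in> B then 1 else 0)"
      unfolding cwin2 using False by simp
    moreover have "(i - 1 \<in> B) = (0 < i \<and> i < length p \<and> p!(i-1) > p!i)"
      using False i by (auto simp: B_def)
    ultimately show ?thesis unfolding cA cB using W False i by auto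
  qed
qed

definition pkp :: "nat list \<Rightarrow> nat \<Rightarrow> bool" where
  "pkp s j \<longleftrightarrow> 0 < j \<and> j + 1 < length s \<and> s ! (j - 1) < s ! j \<and> s ! j > s ! (j + 1)"

lemma peaks_pkp: "peaks s = card {j. pkp s j}" unfolding peaks_def pkp_def ..

lemma peaks_ins:
  assumes i: "i \<le> length p" and n: "length p \<ge> 1" and m: "\<forall>x\<in>set p. x < m"
  shows "peaks (take i p @ m # drop i p) + (if 0 < i \<and> pkp p (i-1) then 1 else 0)
          + (if 0 < i \<and> pkp p i then 1 else 0)
         = peaks p + (if 0 < i \<and> i < length p then 1 else 0)"
proof -
  define s where "s = take i p @ m # drop i p"
  have ls: "length s = Suc (length p)" using i by (simp add: s_def)
  have sn: "\<And>j. s ! j = (if j < i then p ! j else if j = i then m else p ! (j - 1))"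
    using i by (simp add: s_def ins_nth)
  define A where "A = {j. pkp s j}"
  define B where "B = {j. pkp p j}"
  have fA: "finite A" unfolding A_def pkp_def by (rule finite_subset[of _ "{..<length s}"]) auto
  have fB: "finite B" unfolding B_def pkp_def by (rule finite_subset[of _ "{..<length p}"]) auto
  have mlt: "\<And>j. j < length p \<Longrightarrow> p ! j < m" using m by auto
  have m0: "p ! 0 < m" using mlt[of 0] n by (cases p) auto
  have W: "card A + card (B \<inter> {i-1..<i+1}) = card B + card (A \<inter> {i-1..i+1})"
  proof (rule card_window[OF fA fB])
    show "i - 1 \<le> i + 1" by simp
    fix j
    show "j < i - 1 \<Longrightarrow> (j \<in> A) = (j \<in> B)" unfolding A_def B_def pkp_def using i by (auto simp: ls sn)
    show "i + 1 \<le> j \<Longrightarrow> (Suc j \<in> A) = (j \<in> B)" unfolding A_def B_def pkp_def by (auto simp: ls sn)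
  qed
  have cA: "peaks (take i p @ m # drop i p) = card A" unfolding s_def[symmetric] peaks_pkp A_def ..
  have cB: "peaks p = card B" unfolding peaks_pkp B_def ..
  show ?thesis
  proof (cases "i = 0")
    case True
    have "card (A \<inter> {i-1..i+1}) = 0"
      unfolding cwin3 using True n m0 by (auto simp add: A_def pkp_def ls sn)
    moreover have "card (B \<inter> {i-1..<i+1}) = 0"
      unfolding cwin2 using True by (simp add: B_def pkp_def)
    ultimately show ?thesis unfolding cA cB using W True n by auto
  next
    case False
    have "card (A \<inter> {i-1..i+1}) = (if i < length p then 1 else 0)"
      unfolding cwin3 using False i mlt[of i] mlt[of "i-1"] by (auto simp add: A_def pkp_def ls sn)
    moreover have "card (B \<inter> {i-1..<i+1}) = (if i - 1 \<in> B then 1 else 0) + (if i \<in> B then 1 else 0)"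
      unfolding cwin2 using False by simp
    ultimately show ?thesis unfolding cA cB using W False i by (auto simp: B_def)
  qed
qed



lemma LRmin_ins:
  assumes i: "i \<le> length p" and m: "\<forall>x\<in>set p. x < m"
  shows "LRmin (take i p @ m # drop i p) = LRmin p + (if i = 0 then 1 else 0)"
proof -
  define s where "s = take i p @ m # drop i p"
  have ls: "length s = Suc (length p)" using i by (simp add: s_def)
  have sn: "\<And>j. s ! j = (if j < i then p ! j else if j = i then m else p ! (j - 1))"
    using i by (simp add: s_def ins_nth)
  define A where "A = {j. j < length s \<and> (\<forall>k<j. s ! k > s ! j)}"
  define B where "B = {j. j < length p \<and> (\<forall>k<j. p ! k > p ! j)}"
  have fA: "finite A" unfolding A_def by (rule finite_subset[of _ "{..<length s}"]) auto
  have fB: "finite B" unfolding B_def by (rule finite_subset[of _ "{..<length p}"]) auto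
  have mlt: "\<And>j. j < length p \<Longrightarrow> p ! j < m" using m by auto
  have W: "card A + card (B \<inter> {i..<i}) = card B + card (A \<inter> {i..i})"
  proof (rule card_window[OF fA fB])
    show "i \<le> i" by simp
    fix j
    show "j < i \<Longrightarrow> (j \<in> A) = (j \<in> B)" unfolding A_def B_def using i by (auto simp: ls sn)
    assume ij: "i \<le> j"
    show "(Suc j \<in> A) = (j \<in> B)"
    proof
      assume "Suc j \<in> A"
      then have jl: "j < length p" and h: "\<And>k. k < Suc j \<Longrightarrow> s ! k > s ! Suc j" by (auto simp: A_def ls)
      have "\<forall>k<j. p ! k > p ! j"
      proof (intro allI impI)
        fix k assume kj: "k < j"
        show "p ! k > p ! j"
        proof (cases "k < i")
          case True then show ?thesis using h[of k] kj ij by (simp add: sn)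
        next
          case False then show ?thesis using h[of "Suc k"] kj ij by (simp add: sn)
        qed
      qed
      then show "j \<in> B" using jl by (simp add: B_def)
    next
      assume "j \<in> B"
      then have jl: "j < length p" and h: "\<And>k. k < j \<Longrightarrow> p ! k > p ! j" by (auto simp: B_def)
      have "\<forall>k<Suc j. s ! k > s ! Suc j"
      proof (intro allI impI)
        fix k assume kj: "k < Suc j"
        show "s ! k > s ! Suc j"
        proof (cases "k < i")
          case True then show ?thesis using h[of k] kj ij by (simp add: sn)
        next
          case False
          show ?thesis
          proof (cases "k = i")
            case True then show ?thesis using mlt[OF jl] ij by (simp add: sn)
          next
            case False2: False
            then show ?thesis using h[of "k - 1"] kj ij False by (simp add: sn)
          qed
        qed
      qed
      then show "Suc j \<in> A" using jl by (simp add: A_def ls)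
    qed
  qed
  have cA: "LRmin (take i p @ m # drop i p) = card A" unfolding s_def[symmetric] LRmin_def A_def ..
  have cB: "LRmin p = card B" unfolding LRmin_def B_def ..
  have "card (A \<inter> {i..i}) = (if i = 0 then 1 else 0)"
  proof (cases "i = 0")
    case True then show ?thesis by (simp add: A_def ls)
  next
    case False
    have pn: "p \<noteq> []" using False i by auto
    have "s ! 0 < s ! i" using False mlt[of 0] pn by (simp add: sn)
    then have "i \<notin> A" using False by (auto simp: A_def)
    then show ?thesis using False by simp
  qed
  then show ?thesis unfolding cA cB using W by simp
qed

lemma RLmin_ins:
  assumes i: "i \<le> length p" and m: "\<forall>x\<in>set p. x < m"
  shows "RLmin (take i p @ m # drop i p) = RLmin p + (if i = length p then 1 else 0)"
proof -
  define s where "s = take i p @ m # drop i p"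
  have ls: "length s = Suc (length p)" using i by (simp add: s_def)
  have sn: "\<And>j. s ! j = (if j < i then p ! j else if j = i then m else p ! (j - 1))"
    using i by (simp add: s_def ins_nth)
  define A where "A = {j. j < length s \<and> (\<forall>k. j < k \<and> k < length s \<longrightarrow> s ! k > s ! j)}"
  define B where "B = {j. j < length p \<and> (\<forall>k. j < k \<and> k < length p \<longrightarrow> p ! k > p ! j)}"
  have fA: "finite A" unfolding A_def by (rule finite_subset[of _ "{..<length s}"]) auto
  have fB: "finite B" unfolding B_def by (rule finite_subset[of _ "{..<length p}"]) auto
  have mlt: "\<And>j. j < length p \<Longrightarrow> p ! j < m" using m by auto
  have W: "card A + card (B \<inter> {i..<i}) = card B + card (A \<inter> {i..i})"
  proof (rule card_window[OF fA fB])
    show "i \<le> i" by simp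
    fix j
    assume ij: "i \<le> j"
    show "(Suc j \<in> A) = (j \<in> B)"
    proof
      assume "Suc j \<in> A"
      then have jl: "j < length p" and h: "\<And>k. Suc j < k \<Longrightarrow> k < Suc (length p) \<Longrightarrow> s ! k > s ! Suc j"
        by (auto simp: A_def ls)
      have "\<forall>k. j < k \<and> k < length p \<longrightarrow> p ! k > p ! j"
      proof (intro allI impI)
        fix k assume kj: "j < k \<and> k < length p"
        show "p ! k > p ! j" using h[of "Suc k"] kj ij by (simp add: sn)
      qed
      then show "j \<in> B" using jl by (simp add: B_def)
    next
      assume "j \<in> B"
      then have jl: "j < length p" and h: "\<And>k. j < k \<Longrightarrow> k < length p \<Longrightarrow> p ! k > p ! j" by (auto simp: B_def)
      have "\<forall>k. Suc j < k \<and> k < length s \<longrightarrow> s ! k > s ! Suc j"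
      proof (intro allI impI)
        fix k assume kj: "Suc j < k \<and> k < length s"
        have a1: "j < k - 1" "k - 1 < length p" using kj ls by arith+
        show "s ! k > s ! Suc j" using h[OF a1] kj ij by (simp add: sn)
      qed
      then show "Suc j \<in> A" using jl by (simp add: A_def ls)
    qed
  next
    fix j assume ji: "j < i"
    show "(j \<in> A) = (j \<in> B)"
    proof
      assume "j \<in> A"
      then have jl: "j < length p" and h: "\<And>k. j < k \<Longrightarrow> k < Suc (length p) \<Longrightarrow> s ! k > s ! j"
        using ji i by (auto simp: A_def ls)
      have "\<forall>k. j < k \<and> k < length p \<longrightarrow> p ! k > p ! j"
      proof (intro allI impI)
        fix k assume kj: "j < k \<and> k < length p"
        show "p ! k > p ! j"
        proof (cases "k < i")
          case True then show ?thesis using h[of k] kj ji by (simp add: sn)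
        next
          case False then show ?thesis using h[of "Suc k"] kj ji by (simp add: sn)
        qed
      qed
      then show "j \<in> B" using jl by (simp add: B_def)
    next
      assume "j \<in> B"
      then have jl: "j < length p" and h: "\<And>k. j < k \<Longrightarrow> k < length p \<Longrightarrow> p ! k > p ! j" by (auto simp: B_def)
      have "\<forall>k. j < k \<and> k < length s \<longrightarrow> s ! k > s ! j"
      proof (intro allI impI)
        fix k assume kj: "j < k \<and> k < length s"
        show "s ! k > s ! j"
        proof (cases "k < i")
          case True then show ?thesis using h[of k] kj ji i by (simp add: sn)
        next
          case False
          show ?thesis
          proof (cases "k = i")
            case True then show ?thesis using mlt[OF jl] ji by (simp add: sn)
          next
            case False2: False
            then show ?thesis using h[of "k - 1"] kj ji False ls by (simp add: sn)
          qed
        qed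
      qed
      then show "j \<in> A" using jl by (simp add: A_def ls)
    qed
  qed
  have cA: "RLmin (take i p @ m # drop i p) = card A" unfolding s_def[symmetric] RLmin_def A_def ..
  have cB: "RLmin p = card B" unfolding RLmin_def B_def ..
  have "card (A \<inter> {i..i}) = (if i = length p then 1 else 0)"
  proof (cases "i = length p")
    case True then show ?thesis by (auto simp: A_def ls)
  next
    case False
    have "i \<notin> A" using False mlt[of i] i by (auto simp: A_def sn ls)
    then show ?thesis using False by simp
  qed
  then show ?thesis unfolding cA cB using W by simp
qed



definition Fw :: "complex \<Rightarrow> complex \<Rightarrow> complex \<Rightarrow> complex \<Rightarrow> nat list \<Rightarrow> complex" where
  "Fw a u v w s = u ^ peaks s * v ^ des s * w ^ asc s * a ^ (LRmin s + RLmin s - 2)"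

definition gw :: "complex \<Rightarrow> complex \<Rightarrow> complex \<Rightarrow> complex \<Rightarrow> nat list \<Rightarrow> nat \<Rightarrow> complex" where
  "gw a u v w p i = (if i = 0 then v * a else if i = length p then w * a
     else if p!(i-1) < p!i then v * (if pkp p i then 1 else u) else w * (if pkp p (i-1) then 1 else u))"

lemma LRmin_pos: "p \<noteq> [] \<Longrightarrow> LRmin p \<ge> 1"
proof -
  assume "p \<noteq> []"
  then have "0 \<in> {i. i < length p \<and> (\<forall>j<i. p ! j > p ! i)}" by auto
  moreover have "finite {i. i < length p \<and> (\<forall>j<i. p ! j > p ! i)}" by (rule finite_subset[of _ "{..<length p}"]) auto
  ultimately show ?thesis unfolding LRmin_def by (metis (no_types, lifting) One_nat_def Suc_leI card_gt_0_iff empty_iff)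
qed

lemma RLmin_pos: "p \<noteq> [] \<Longrightarrow> RLmin p \<ge> 1"
proof -
  assume "p \<noteq> []"
  then have "length p - 1 \<in> {i. i < length p \<and> (\<forall>j. i < j \<and> j < length p \<longrightarrow> p ! j > p ! i)}" by auto
  moreover have "finite {i. i < length p \<and> (\<forall>j. i < j \<and> j < length p \<longrightarrow> p ! j > p ! i)}" by (rule finite_subset[of _ "{..<length p}"]) auto
  ultimately show ?thesis unfolding RLmin_def by (metis (no_types, lifting) One_nat_def Suc_leI card_gt_0_iff empty_iff)
qed

lemma ins_weight:
  assumes i: "i \<le> length p" and n: "length p \<ge> 1" and m: "\<forall>x\<in>set p. x < m" and d: "distinct p"
  shows "Fw a u v w (take i p @ m # drop i p) = Fw a u v w p * gw a u v w p i"
proof -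
  define s where "s = take i p @ m # drop i p"
  note A = asc_ins[OF i n m, folded s_def]
  note D = des_ins[OF i n m, folded s_def]
  note P = peaks_ins[OF i n m, folded s_def]
  note L = LRmin_ins[OF i m, folded s_def]
  note R = RLmin_ins[OF i m, folded s_def]
  have pn: "p \<noteq> []" using n by auto
  have l1: "LRmin p \<ge> 1" "RLmin p \<ge> 1" using LRmin_pos[OF pn] RLmin_pos[OF pn] by auto
  show ?thesis
  proof (cases "i = 0")
    case True
    have "pkp p 0 = False" by (simp add: pkp_def)
    then have e: "asc s = asc p" "des s = Suc (des p)" "peaks s = peaks p"
      "LRmin s + RLmin s - 2 = Suc (LRmin p + RLmin p - 2)"
      using A D P L R True n l1 by auto
    show ?thesis unfolding s_def[symmetric] Fw_def gw_def using True e by simp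
  next
    case False
    show ?thesis
    proof (cases "i = length p")
      case True
      have "pkp p (i - 1) = False" "pkp p i = False" using True by (auto simp: pkp_def)
      then have e: "asc s = Suc (asc p)" "des s = des p" "peaks s = peaks p"
        "LRmin s + RLmin s - 2 = Suc (LRmin p + RLmin p - 2)"
        using A D P L R True False n l1 by auto
      show ?thesis unfolding s_def[symmetric] Fw_def gw_def using True False e by simp
    next
      case False2: False
      have ii: "0 < i" "i < length p" using False False2 i by auto
      have ne: "p!(i-1) \<noteq> p!i" using d ii by (simp add: nth_eq_iff_index_eq)
      have LR: "LRmin s + RLmin s - 2 = LRmin p + RLmin p - 2" using L R ii by auto
      show ?thesis
      proof (cases "p!(i-1) < p!i")
        case True
        have "pkp p (i-1) = False" using True by (auto simp: pkp_def)
        then have e: "asc s = asc p" "des s = Suc (des p)"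
          "peaks s = (if pkp p i then peaks p else Suc (peaks p))"
          using A D P ii True by auto
        show ?thesis unfolding s_def[symmetric] Fw_def gw_def using True ii e LR by (simp add: algebra_simps)
      next
        case False3: False
        then have gt: "p!(i-1) > p!i" using ne by simp
        have "pkp p i = False" using gt ii by (auto simp: pkp_def)
        then have e: "asc s = Suc (asc p)" "des s = des p"
          "peaks s = (if pkp p (i-1) then peaks p else Suc (peaks p))"
          using A D P ii gt by auto
        show ?thesis unfolding s_def[symmetric] Fw_def gw_def using False3 ii e LR by (simp add: algebra_simps)
      qed
    qed
  qed
qed



lemma sum_if_const: "finite S \<Longrightarrow> (\<Sum>i\<in>S. if Q i then c else 0) = of_nat (card {i\<in>S. Q i}) * (c::complex)"
  by (simp add: sum.inter_filter[symmetric])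

lemma card_shift: "card {i\<in>{1..<(n::nat)}. Q (i - 1)} = card {j. j + 1 < n \<and> Q j}"
proof -
  have "{i\<in>{1..<n}. Q (i - 1)} = Suc ` {j. j + 1 < n \<and> Q j}"
  proof
    show "{i\<in>{1..<n}. Q (i - 1)} \<subseteq> Suc ` {j. j + 1 < n \<and> Q j}"
    proof
      fix i assume "i \<in> {i\<in>{1..<n}. Q (i - 1)}"
      then show "i \<in> Suc ` {j. j + 1 < n \<and> Q j}"
        by (auto intro!: image_eqI[of _ _ "i - 1"])
    qed
  qed auto
  then show ?thesis by (simp add: card_image)
qed

lemma gw_sum:
  assumes n: "length p \<ge> 1" and d: "distinct p"
  shows "(\<Sum>i\<in>{..length p}. gw a u v w p i)
     = a * (v + w) + (v + w - u * v - u * w) * of_nat (peaks p) + u * v * of_nat (asc p) + u * w * of_nat (des p)"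
proof -
  define n where "n = length p"
  have S: "{..n} = insert 0 (insert n {1..<n})" using n unfolding n_def by auto
  have n0: "n \<noteq> 0" using n unfolding n_def by auto
  have g: "\<And>i. i \<in> {1..<n} \<Longrightarrow> gw a u v w p i =
      (if p!(i-1) < p!i then u*v else 0) + (if p!(i-1) > p!i then u*w else 0)
      + (if pkp p i then v - u*v else 0) + (if pkp p (i-1) then w - u*w else 0)"
  proof -
    fix i assume i: "i \<in> {1..<n}"
    have ii: "i - 1 < length p" "i < length p" "i - 1 \<noteq> i" using i unfolding n_def by auto
    have ne: "p!(i-1) \<noteq> p!i" using d ii by (simp add: nth_eq_iff_index_eq)
    have "pkp p i \<Longrightarrow> p!(i-1) < p!i" by (simp add: pkp_def)
    moreover have "pkp p (i-1) \<Longrightarrow> p!(i-1) > p!i"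
    proof -
      assume h: "pkp p (i-1)"
      obtain j where j: "i = Suc j" using i by (cases i) auto
      from h show ?thesis unfolding j pkp_def by simp
    qed
    ultimately show "?thesis i" using i ne unfolding gw_def n_def by (auto simp: algebra_simps)
  qed
  have sh: "\<And>R. {i\<in>{1..<n}. R (p!(i-1)) (p!i)} = {i\<in>{1..<n}. R (p!(i-1)) (p!(i-1+1))}"
  proof (rule Collect_cong)
    fix R i
    show "(i \<in> {1..<n} \<and> R (p!(i-1)) (p!i)) = (i \<in> {1..<n} \<and> R (p!(i-1)) (p!(i-1+1)))"
      by (cases i) auto
  qed
  have c1: "card {i\<in>{1..<n}. p!(i-1) < p!i} = asc p"
    using card_shift[of n "\<lambda>j. p!j < p!(j+1)"] sh[of "(<)"] n unfolding asc_def n_def by simp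
  have c2: "card {i\<in>{1..<n}. p!(i-1) > p!i} = des p"
    using card_shift[of n "\<lambda>j. p!j > p!(j+1)"] sh[of "(>)"] n unfolding des_def n_def by simp
  have c3: "card {i\<in>{1..<n}. pkp p i} = peaks p"
  proof -
    have "{i\<in>{1..<n}. pkp p i} = {j. pkp p j}" by (auto simp: pkp_def n_def)
    then show ?thesis by (simp add: peaks_pkp)
  qed
  have c4: "card {i\<in>{1..<n}. pkp p (i-1)} = peaks p"
  proof -
    have "{j. j + 1 < n \<and> pkp p j} = {j. pkp p j}" by (auto simp: pkp_def n_def)
    then show ?thesis using card_shift[of n "pkp p"] by (simp add: peaks_pkp)
  qed
  have "(\<Sum>i\<in>{1..<n}. gw a u v w p i) = (\<Sum>i\<in>{1..<n}.
      (if p!(i-1) < p!i then u*v else 0) + (if p!(i-1) > p!i then u*w else 0)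
      + (if pkp p i then v - u*v else 0) + (if pkp p (i-1) then w - u*w else 0))"
    by (rule sum.cong) (auto simp: g)
  also have "\<dots> = of_nat (asc p) * (u*v) + of_nat (des p) * (u*w) + of_nat (peaks p) * (v - u*v)
      + of_nat (peaks p) * (w - u*w)"
    by (simp only: sum.distrib sum_if_const[OF finite_atLeastLessThan] c1 c2 c3 c4)
  finally have mid: "(\<Sum>i\<in>{1..<n}. gw a u v w p i) = \<dots>" .
  have "(\<Sum>i\<in>{..n}. gw a u v w p i) = gw a u v w p 0 + gw a u v w p n + (\<Sum>i\<in>{1..<n}. gw a u v w p i)"
    unfolding S using n0 by simp
  also have "\<dots> = v * a + w * a + (of_nat (asc p) * (u*v) + of_nat (des p) * (u*w) + of_nat (peaks p) * (v - u*v)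
      + of_nat (peaks p) * (w - u*w))" unfolding mid using n0 by (simp add: gw_def n_def)
  finally show ?thesis unfolding n_def by (simp add: algebra_simps)
qed



lemma perm_len: "p \<in> permutations_of_set {1..n} \<Longrightarrow> length p = n"
  using length_finite_permutations_of_set[of p "{1..n}"] by simp

lemma perm_sum_ins:
  "(\<Sum>s\<in>permutations_of_set {1..Suc n}. f s)
   = (\<Sum>p\<in>permutations_of_set {1..n}. \<Sum>i\<in>{..n}. f (take i p @ Suc n # drop i p))"
proof -
  define h where "h = (\<lambda>(p, i). take i p @ Suc n # drop i p)"
  define X where "X = permutations_of_set {1..n} \<times> {..n}"
  have inj: "inj_on h X"
  proof (rule inj_onI)
    fix x y assume x: "x \<in> X" and y: "y \<in> X" and e: "h x = h y"
    obtain p i where xp: "x = (p, i)" by (cases x)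
    obtain q j where yq: "y = (q, j)" by (cases y)
    have p: "set p = {1..n}" "distinct p" "length p = n" "i \<le> n"
      using x xp perm_len[of p n] by (auto simp: X_def permutations_of_set_def)
    have q: "set q = {1..n}" "distinct q" "length q = n" "j \<le> n"
      using y yq perm_len[of q n] by (auto simp: X_def permutations_of_set_def)
    have nm1: "Suc n \<notin> set (take i p)" "Suc n \<notin> set (drop i p)"
      using p by (auto dest: in_set_takeD in_set_dropD)
    have "take i p = take j q \<and> drop i p = drop j q"
      using e append_Cons_eq_iff[OF nm1, of "take j q" "drop j q"] by (simp add: h_def xp yq)
    then have tq: "take i p = take j q" and dq: "drop i p = drop j q" by auto
    have "p = q" using tq dq by (metis append_take_drop_id)
    moreover have li: "length (take i p) = i" "length (take j q) = j" using p q by auto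
    moreover have "i = j" using tq li by metis
    ultimately have "p = q" "i = j" by auto
    then show "x = y" using xp yq by simp
  qed
  have img: "h ` X = permutations_of_set {1..Suc n}"
  proof
    show "h ` X \<subseteq> permutations_of_set {1..Suc n}"
    proof
      fix s assume "s \<in> h ` X"
      then obtain p i where pi: "(p, i) \<in> X" and s: "s = take i p @ Suc n # drop i p"
        by (auto simp: h_def)
      have p: "set p = {1..n}" "distinct p"
        using pi by (auto simp: X_def permutations_of_set_def)
      have sp: "set p = set (take i p) \<union> set (drop i p)" by (metis append_take_drop_id set_append)
      have "set s = insert (Suc n) (set p)"
        unfolding s using sp by auto
      moreover have nm: "Suc n \<notin> set p" using p by auto
      have dp: "distinct (take i p @ drop i p)" using p by simp
      have "distinct s"
        unfolding s using dp nm sp set_take_disj_set_drop_if_distinct[of p i i] by (auto simp: distinct_append)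
      ultimately show "s \<in> permutations_of_set {1..Suc n}"
        using p by (auto simp: permutations_of_set_def)
    qed
  next
    show "permutations_of_set {1..Suc n} \<subseteq> h ` X"
    proof
      fix s assume s: "s \<in> permutations_of_set {1..Suc n}"
      then have ss: "set s = {1..Suc n}" "distinct s" by (auto simp: permutations_of_set_def)
      then have "Suc n \<in> set s" by auto
      then obtain xs ys where sx: "s = xs @ Suc n # ys" by (meson split_list)
      define p where "p = xs @ ys"
      have "set p = set s - {Suc n}" using ss unfolding sx p_def by auto
      also have "\<dots> = {1..n}" using ss(1) by auto
      finally have "set p = {1..n}" .
      moreover have "distinct p" using ss unfolding sx p_def by auto
      ultimately have pp: "p \<in> permutations_of_set {1..n}" by (auto simp: permutations_of_set_def)
      have "length xs \<le> n" using perm_len[OF pp] unfolding p_def by simp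
      then have "(p, length xs) \<in> X" using pp by (simp add: X_def)
      moreover have "h (p, length xs) = s" by (simp add: h_def p_def sx)
      ultimately show "s \<in> h ` X" by force
    qed
  qed
  have "(\<Sum>p\<in>permutations_of_set {1..n}. \<Sum>i\<in>{..n}. f (take i p @ Suc n # drop i p))
      = (\<Sum>x\<in>X. f (h x))"
    unfolding X_def h_def by (simp add: sum.cartesian_product split_def)
  also have "\<dots> = (\<Sum>s\<in>h ` X. f s)" using inj by (simp add: sum.reindex)
  finally show ?thesis using img by simp
qed

lemma P_step:
  assumes n: "n \<ge> 1"
  shows "(\<Sum>s\<in>permutations_of_set {1..Suc n}. Fw a u v w s)
   = (\<Sum>p\<in>permutations_of_set {1..n}. Fw a u v w p *
       (a * (v + w) + (v + w - u * v - u * w) * of_nat (peaks p) + u * v * of_nat (asc p) + u * w * of_nat (des p)))"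
  unfolding perm_sum_ins
proof (rule sum.cong[OF refl])
  fix p assume p: "p \<in> permutations_of_set {1..n}"
  have l: "length p = n" using perm_len[OF p] .
  have m: "\<forall>x\<in>set p. x < Suc n" and d: "distinct p" using p by (auto simp: permutations_of_set_def)
  have "(\<Sum>i\<in>{..n}. Fw a u v w (take i p @ Suc n # drop i p)) = (\<Sum>i\<in>{..n}. Fw a u v w p * gw a u v w p i)"
    by (rule sum.cong[OF refl]) (rule ins_weight, use l n m d in auto)
  also have "\<dots> = Fw a u v w p * (\<Sum>i\<in>{..length p}. gw a u v w p i)" by (simp add: sum_distrib_left l)
  also have "\<dots> = Fw a u v w p * (a * (v + w) + (v + w - u * v - u * w) * of_nat (peaks p) + u * v * of_nat (asc p) + u * w * of_nat (des p))"
    using gw_sum[of p a u v w] l n d by simp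
  finally show "(\<Sum>i\<in>{..n}. Fw a u v w (take i p @ Suc n # drop i p)) = \<dots>" .
qed



lemma DERIV_monsum:
  "((\<lambda>x. \<Sum>s\<in>S. x ^ (e s) * c s) has_field_derivative (\<Sum>s\<in>S. of_nat (e s) * x ^ (e s - 1) * c s)) (at (x::complex))"
  by (rule DERIV_sum) (auto intro!: derivative_eq_intros)

lemma DERIV_gsum:
  "((\<lambda>x. \<Sum>k\<in>K. d k * x ^ k * (c + x) ^ (e k)) has_field_derivative
     (\<Sum>k\<in>K. d k * (of_nat k * x ^ (k - 1) * (c + x) ^ (e k) + x ^ k * (of_nat (e k) * (c + x) ^ (e k - 1))))) (at (x::complex))"
  by (rule DERIV_sum) (auto intro!: derivative_eq_intros simp: algebra_simps)

lemma xpow: "x * (of_nat k * x ^ (k - 1)) = of_nat k * (x::complex) ^ k"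
  by (cases k) auto

lemma deriv_eq:
  assumes "(f has_field_derivative D1) (at x)" "(g has_field_derivative D2) (at x)" "\<And>y. f y = g y"
  shows "D1 = D2"
proof -
  have "f = g" using assms(3) by auto
  then show ?thesis using assms(1,2) DERIV_unique by metis
qed



lemma xpow2: "x * of_nat k * x ^ (k - Suc 0) = of_nat k * (x::complex) ^ k"
  by (cases k) auto

fun gam :: "complex \<Rightarrow> nat \<Rightarrow> nat \<Rightarrow> complex" where
  "gam a 0 k = (if k = 0 then 1 else 0)"
| "gam a (Suc n) 0 = a * gam a n 0"
| "gam a (Suc n) (Suc k) = (a + of_nat (Suc k)) * gam a n (Suc k) + 2 * of_nat (n - 2 * k) * gam a n k"

lemma gam_zero: "n < 2 * k \<Longrightarrow> gam a n k = 0"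
proof (induction n arbitrary: k)
  case 0 then show ?case by simp
next
  case (Suc n)
  then obtain j where k: "k = Suc j" by (cases k) auto
  have "gam a n (Suc j) = 0" using Suc k by simp
  moreover have "of_nat (n - 2 * j) * gam a n j = 0"
  proof (cases "n < 2 * j")
    case True then show ?thesis using Suc.IH by simp
  next
    case False then have "n - 2 * j = 0" using Suc k by simp
    then show ?thesis by simp
  qed
  ultimately show ?case using k by simp
qed

definition Gm :: "complex \<Rightarrow> nat \<Rightarrow> complex \<Rightarrow> complex \<Rightarrow> complex \<Rightarrow> complex" where
  "Gm a n u v w = (\<Sum>k\<le>n. gam a n k * (u * v * w) ^ k * (v + w) ^ (n - 2 * k))"

definition Pp :: "complex \<Rightarrow> nat \<Rightarrow> complex \<Rightarrow> complex \<Rightarrow> complex \<Rightarrow> complex" where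
  "Pp a n u v w = (\<Sum>s\<in>permutations_of_set {1..Suc n}. Fw a u v w s)"

lemma SP_eq:
  assumes IH: "\<And>u v w. Pp a n u v w = Gm a n u v w"
  shows "(\<Sum>s\<in>permutations_of_set {1..Suc n}. of_nat (peaks s) * Fw a u v w s)
       = (\<Sum>k\<le>n. of_nat k * gam a n k * (u * v * w) ^ k * (v + w) ^ (n - 2 * k))"
proof -
  define S where "S = permutations_of_set {1..Suc n}"
  define C where "C s = v ^ des s * w ^ asc s * a ^ (LRmin s + RLmin s - 2)" for s
  define D where "D k = gam a n k * (v * w) ^ k * (v + w) ^ (n - 2 * k)" for k
  have e: "(\<Sum>s\<in>S. x ^ peaks s * C s) = (\<Sum>k\<in>{..n}. x ^ k * D k)" for x
  proof -
    have "(\<Sum>s\<in>S. x ^ peaks s * C s) = Pp a n x v w"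
      unfolding Pp_def S_def Fw_def C_def by (simp add: mult.assoc)
    also have "\<dots> = Gm a n x v w" by (rule IH)
    also have "\<dots> = (\<Sum>k\<in>{..n}. x ^ k * D k)"
      unfolding Gm_def D_def by (simp add: power_mult_distrib algebra_simps)
    finally show ?thesis .
  qed
  have "(\<Sum>s\<in>S. of_nat (peaks s) * u ^ (peaks s - 1) * C s) = (\<Sum>k\<in>{..n}. of_nat k * u ^ (k - 1) * D k)"
    by (rule deriv_eq[OF DERIV_monsum DERIV_monsum e])
  then have "u * (\<Sum>s\<in>S. of_nat (peaks s) * u ^ (peaks s - 1) * C s) = u * (\<Sum>k\<in>{..n}. of_nat k * u ^ (k - 1) * D k)"
    by simp
  then have "(\<Sum>s\<in>S. of_nat (peaks s) * u ^ peaks s * C s) = (\<Sum>k\<in>{..n}. of_nat k * u ^ k * D k)"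
    by (simp add: sum_distrib_left mult.assoc[symmetric] xpow2)
  moreover have "(\<Sum>s\<in>S. of_nat (peaks s) * u ^ peaks s * C s) = (\<Sum>s\<in>S. of_nat (peaks s) * Fw a u v w s)"
    unfolding Fw_def C_def by (simp add: mult.assoc)
  moreover have "(\<Sum>k\<in>{..n}. of_nat k * u ^ k * D k) = (\<Sum>k\<le>n. of_nat k * gam a n k * (u * v * w) ^ k * (v + w) ^ (n - 2 * k))"
    unfolding D_def by (simp add: power_mult_distrib algebra_simps)
  ultimately show ?thesis unfolding S_def by simp
qed

lemma S_gen:
  fixes x c :: complex
  assumes e: "\<And>x. (\<Sum>s\<in>S. x ^ (f s) * C s) = (\<Sum>k\<in>{..n}. d k * x ^ k * (c + x) ^ (n - 2 * k))"
  shows "(\<Sum>s\<in>S. of_nat (f s) * x ^ (f s) * C s)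
     = (\<Sum>k\<in>{..n}. d k * (of_nat k * x ^ k * (c + x) ^ (n - 2 * k)
          + of_nat (n - 2 * k) * x * x ^ k * (c + x) ^ (n - 2 * k - 1)))"
proof -
  have "(\<Sum>s\<in>S. of_nat (f s) * x ^ (f s - 1) * C s) =
     (\<Sum>k\<in>{..n}. d k * (of_nat k * x ^ (k - 1) * (c + x) ^ (n - 2 * k) + x ^ k * (of_nat (n - 2 * k) * (c + x) ^ (n - 2 * k - 1))))"
    by (rule deriv_eq[OF DERIV_monsum DERIV_gsum e])
  note D = this
  have "(\<Sum>s\<in>S. of_nat (f s) * x ^ (f s) * C s) = x * (\<Sum>s\<in>S. of_nat (f s) * x ^ (f s - 1) * C s)"
    by (simp add: sum_distrib_left mult.assoc[symmetric] xpow2)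
  also have "\<dots> = x * (\<Sum>k\<in>{..n}. d k * (of_nat k * x ^ (k - 1) * (c + x) ^ (n - 2 * k) + x ^ k * (of_nat (n - 2 * k) * (c + x) ^ (n - 2 * k - 1))))"
    by (simp only: D)
  also have "\<dots>
     = (\<Sum>k\<in>{..n}. d k * (of_nat k * x ^ k * (c + x) ^ (n - 2 * k)
          + of_nat (n - 2 * k) * x * x ^ k * (c + x) ^ (n - 2 * k - 1)))"
    unfolding sum_distrib_left
  proof (rule sum.cong[OF refl])
    fix k
    show "x * (d k * (of_nat k * x ^ (k - 1) * (c + x) ^ (n - 2 * k) + x ^ k * (of_nat (n - 2 * k) * (c + x) ^ (n - 2 * k - 1))))
      = d k * (of_nat k * x ^ k * (c + x) ^ (n - 2 * k) + of_nat (n - 2 * k) * x * x ^ k * (c + x) ^ (n - 2 * k - 1))"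
      by (cases k) (simp_all add: algebra_simps)
  qed
  finally show ?thesis .
qed

lemma SA_eq:
  assumes IH: "\<And>u v w. Pp a n u v w = Gm a n u v w"
  shows "(\<Sum>s\<in>permutations_of_set {1..Suc n}. of_nat (asc s) * Fw a u v w s)
       = (\<Sum>k\<le>n. gam a n k * (of_nat k * (u * v * w) ^ k * (v + w) ^ (n - 2 * k)
            + of_nat (n - 2 * k) * w * (u * v * w) ^ k * (v + w) ^ (n - 2 * k - 1)))"
proof -
  define S where "S = permutations_of_set {1..Suc n}"
  define C where "C s = u ^ peaks s * v ^ des s * a ^ (LRmin s + RLmin s - 2)" for s
  define d where "d k = gam a n k * (u * v) ^ k" for k
  have e: "(\<Sum>s\<in>S. x ^ asc s * C s) = (\<Sum>k\<in>{..n}. d k * x ^ k * (v + x) ^ (n - 2 * k))" for x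
  proof -
    have "(\<Sum>s\<in>S. x ^ asc s * C s) = Pp a n u v x"
      unfolding Pp_def S_def Fw_def C_def by (simp add: ac_simps)
    also have "\<dots> = Gm a n u v x" by (rule IH)
    also have "\<dots> = (\<Sum>k\<in>{..n}. d k * x ^ k * (v + x) ^ (n - 2 * k))"
      unfolding Gm_def d_def by (simp add: power_mult_distrib algebra_simps)
    finally show ?thesis .
  qed
  have "(\<Sum>s\<in>S. of_nat (asc s) * w ^ asc s * C s) = (\<Sum>k\<in>{..n}. d k * (of_nat k * w ^ k * (v + w) ^ (n - 2 * k)
          + of_nat (n - 2 * k) * w * w ^ k * (v + w) ^ (n - 2 * k - 1)))"
    by (rule S_gen[OF e])
  moreover have "(\<Sum>s\<in>S. of_nat (asc s) * w ^ asc s * C s) = (\<Sum>s\<in>S. of_nat (asc s) * Fw a u v w s)"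
    unfolding Fw_def C_def by (simp add: ac_simps)
  ultimately show ?thesis unfolding S_def d_def by (simp add: power_mult_distrib algebra_simps)
qed

lemma SD_eq:
  assumes IH: "\<And>u v w. Pp a n u v w = Gm a n u v w"
  shows "(\<Sum>s\<in>permutations_of_set {1..Suc n}. of_nat (des s) * Fw a u v w s)
       = (\<Sum>k\<le>n. gam a n k * (of_nat k * (u * v * w) ^ k * (v + w) ^ (n - 2 * k)
            + of_nat (n - 2 * k) * v * (u * v * w) ^ k * (v + w) ^ (n - 2 * k - 1)))"
proof -
  define S where "S = permutations_of_set {1..Suc n}"
  define C where "C s = u ^ peaks s * w ^ asc s * a ^ (LRmin s + RLmin s - 2)" for s
  define d where "d k = gam a n k * (u * w) ^ k" for k
  have e: "(\<Sum>s\<in>S. x ^ des s * C s) = (\<Sum>k\<in>{..n}. d k * x ^ k * (w + x) ^ (n - 2 * k))" for x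
  proof -
    have "(\<Sum>s\<in>S. x ^ des s * C s) = Pp a n u x w"
      unfolding Pp_def S_def Fw_def C_def by (simp add: ac_simps)
    also have "\<dots> = Gm a n u x w" by (rule IH)
    also have "\<dots> = (\<Sum>k\<in>{..n}. d k * x ^ k * (w + x) ^ (n - 2 * k))"
      unfolding Gm_def d_def by (simp add: power_mult_distrib algebra_simps)
    finally show ?thesis .
  qed
  have "(\<Sum>s\<in>S. of_nat (des s) * v ^ des s * C s) = (\<Sum>k\<in>{..n}. d k * (of_nat k * v ^ k * (w + v) ^ (n - 2 * k)
          + of_nat (n - 2 * k) * v * v ^ k * (w + v) ^ (n - 2 * k - 1)))"
    by (rule S_gen[OF e])
  moreover have "(\<Sum>s\<in>S. of_nat (des s) * v ^ des s * C s) = (\<Sum>s\<in>S. of_nat (des s) * Fw a u v w s)"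
    unfolding Fw_def C_def by (simp add: ac_simps)
  ultimately show ?thesis unfolding S_def d_def by (simp add: power_mult_distrib algebra_simps)
qed



lemma gam_step:
  "(\<Sum>k\<le>Suc n. gam a (Suc n) k * X ^ k * Y ^ (Suc n - 2 * k))
   = (\<Sum>k\<le>n. gam a n k * ((a + of_nat k) * X ^ k * Y ^ (n - 2 * k) * Y
        + 2 * of_nat (n - 2 * k) * X * X ^ k * Y ^ (n - 2 * k - 1)))"
proof -
  define h where "h k = (a + of_nat k) * gam a n k * X ^ k * Y ^ (Suc n - 2 * k)" for k
  have "(\<Sum>k\<le>Suc n. gam a (Suc n) k * X ^ k * Y ^ (Suc n - 2 * k))
      = gam a (Suc n) 0 * Y ^ Suc n + (\<Sum>k\<le>n. gam a (Suc n) (Suc k) * X ^ Suc k * Y ^ (Suc n - 2 * Suc k))"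
    by (subst sum.atMost_Suc_shift) simp
  also have "\<dots> = h 0 + (\<Sum>k\<le>n. h (Suc k)) + (\<Sum>k\<le>n. 2 * of_nat (n - 2 * k) * gam a n k * X * X ^ k * Y ^ (n - 2 * k - 1))"
    by (simp add: h_def sum.distrib algebra_simps)
  also have "h 0 + (\<Sum>k\<le>n. h (Suc k)) = (\<Sum>k\<le>Suc n. h k)"
    by (subst sum.atMost_Suc_shift) simp
  also have "\<dots> = (\<Sum>k\<le>n. h k)"
    using gam_zero[of n "Suc n" a] by (simp add: h_def)
  also have "(\<Sum>k\<le>n. h k) = (\<Sum>k\<le>n. (a + of_nat k) * gam a n k * X ^ k * Y ^ (n - 2 * k) * Y)"
  proof (rule sum.cong[OF refl])
    fix k
    show "h k = (a + of_nat k) * gam a n k * X ^ k * Y ^ (n - 2 * k) * Y"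
    proof (cases "2 * k \<le> n")
      case True
      then have "Suc n - 2 * k = Suc (n - 2 * k)" by arith
      then show ?thesis by (simp add: h_def algebra_simps)
    next
      case False then show ?thesis using gam_zero[of n k a] by (simp add: h_def)
    qed
  qed
  finally show ?thesis by (simp add: sum.distrib algebra_simps)
qed

lemma Pp_base: "Pp a 0 u v w = 1"
proof -
  have "permutations_of_set {1..Suc 0} = {[1]}" by simp
  moreover have "peaks [1] = 0" "des [1] = 0" "asc [1] = 0"
    by (simp_all add: peaks_def des_def asc_def)
  moreover have "LRmin [1] = 1" "RLmin [1] = 1"
  proof -
    have "{i. i < length [1::nat] \<and> (\<forall>j<i. [1::nat] ! j > [1] ! i)} = {0}" by auto
    then show "LRmin [1] = 1" by (simp add: LRmin_def)
    have "{i. i < length [1::nat] \<and> (\<forall>j. i < j \<and> j < length [1::nat] \<longrightarrow> [1::nat] ! j > [1] ! i)} = {0}" by auto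
    then show "RLmin [1] = 1" by (simp add: RLmin_def)
  qed
  ultimately show ?thesis by (simp add: Pp_def Fw_def)
qed

lemma Pp_Gm: "Pp a n u v w = Gm a n u v w"
proof (induction n arbitrary: u v w)
  case 0
  then show ?case by (simp add: Pp_base Gm_def)
next
  case (Suc n)
  define S where "S = permutations_of_set {1..Suc n}"
  define X where "X = u * v * w"
  define Y where "Y = v + w"
  have "Pp a (Suc n) u v w = (\<Sum>s\<in>S. Fw a u v w s *
       (a * (v + w) + (v + w - u * v - u * w) * of_nat (peaks s) + u * v * of_nat (asc s) + u * w * of_nat (des s)))"
    unfolding Pp_def S_def by (rule P_step) simp
  also have "\<dots> = a * (v + w) * (\<Sum>s\<in>S. Fw a u v w s) + (v + w - u * v - u * w) * (\<Sum>s\<in>S. of_nat (peaks s) * Fw a u v w s)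
      + u * v * (\<Sum>s\<in>S. of_nat (asc s) * Fw a u v w s) + u * w * (\<Sum>s\<in>S. of_nat (des s) * Fw a u v w s)"
    apply (simp only: sum_distrib_left sum.distrib[symmetric])
    apply (rule sum.cong[OF refl])
    apply (simp add: algebra_simps)
    done
  also have "\<dots> = a * Y * (\<Sum>k\<le>n. gam a n k * X ^ k * Y ^ (n - 2 * k))
      + (Y - u * v - u * w) * (\<Sum>k\<le>n. of_nat k * gam a n k * X ^ k * Y ^ (n - 2 * k))
      + u * v * (\<Sum>k\<le>n. gam a n k * (of_nat k * X ^ k * Y ^ (n - 2 * k)
            + of_nat (n - 2 * k) * w * X ^ k * Y ^ (n - 2 * k - 1)))
      + u * w * (\<Sum>k\<le>n. gam a n k * (of_nat k * X ^ k * Y ^ (n - 2 * k)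
            + of_nat (n - 2 * k) * v * X ^ k * Y ^ (n - 2 * k - 1)))"
    using Suc.IH[unfolded Pp_def Gm_def] SP_eq[OF Suc.IH] SA_eq[OF Suc.IH] SD_eq[OF Suc.IH]
    unfolding S_def X_def Y_def Pp_def Gm_def by simp
  also have "\<dots> = (\<Sum>k\<le>n. gam a n k * ((a + of_nat k) * X ^ k * Y ^ (n - 2 * k) * Y
        + 2 * of_nat (n - 2 * k) * X * X ^ k * Y ^ (n - 2 * k - 1)))"
    unfolding sum_distrib_left sum.distrib[symmetric]
    by (rule sum.cong[OF refl]) (simp add: X_def algebra_simps)
  also have "\<dots> = Gm a (Suc n) u v w"
    unfolding gam_step[symmetric] Gm_def X_def Y_def by simp
  finally show ?case .
qed



theorem theorem6p4:
  fixes n :: nat and u v w \<alpha> :: complex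
  assumes "n \<ge> 1"
  defines "x \<equiv> ((w + v) - csqrt ((w + v)\<^sup>2 - 4 * u * v * w)) / 2"
      and "y \<equiv> ((w + v) + csqrt ((w + v)\<^sup>2 - 4 * u * v * w)) / 2"
  shows "(\<Sum>s\<in>permutations_of_set {1..n}.
            u ^ peaks s * v ^ des s * w ^ asc s * \<alpha> ^ (LRmin s + RLmin s - 2))
       = (\<Sum>s\<in>permutations_of_set {1..n}.
            x ^ des s * y ^ asc s * \<alpha> ^ (LRmin s + RLmin s - 2))"
proof -
  obtain m where n: "n = Suc m" using assms(1) by (cases n) auto
  define r where "r = csqrt ((w + v)\<^sup>2 - 4 * u * v * w)"
  have r2: "r ^ 2 = (w + v)\<^sup>2 - 4 * u * v * w" unfolding r_def by (rule power2_csqrt)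
  have xy1: "x + y = v + w" unfolding x_def y_def r_def[symmetric] by (simp add: field_simps)
  have "x * y = ((w + v)\<^sup>2 - r ^ 2) / 4" unfolding x_def y_def r_def[symmetric]
    by (simp add: field_simps power2_eq_square)
  also have "\<dots> = u * v * w" unfolding r2 by (simp add: field_simps)
  finally have xy2: "1 * x * y = u * v * w" by simp
  have "(\<Sum>s\<in>permutations_of_set {1..n}. u ^ peaks s * v ^ des s * w ^ asc s * \<alpha> ^ (LRmin s + RLmin s - 2))
      = Pp \<alpha> m u v w" unfolding Pp_def Fw_def n ..
  also have "\<dots> = Gm \<alpha> m u v w" by (rule Pp_Gm)
  also have "\<dots> = Gm \<alpha> m 1 x y" unfolding Gm_def xy1 xy2 ..
  also have "\<dots> = Pp \<alpha> m 1 x y" by (rule Pp_Gm[symmetric])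
  also have "\<dots> = (\<Sum>s\<in>permutations_of_set {1..n}. x ^ des s * y ^ asc s * \<alpha> ^ (LRmin s + RLmin s - 2))"
    unfolding Pp_def Fw_def n by simp
  finally show ?thesis .
qed


end
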